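(* Let $\sigma(x)=1/(1+e^{-x})$, let $a,\gamma_n^*,B_n\ge1$, $\beta_n>0$, $K_n,L,r,n\in\mathbb{N}$, and let $f_{\mathbf{w}}$ be the network described in the context. Let $(X_1,Y_1),\dots,(X_n,Y_n)\in\mathbb{R}^d\times\mathbb{R}$ with $X_i\in[-a,a]^d$ and $|Y_i|\le\beta_n$ ($i=1,\dots,n$), and let $F_n(\mathbf{w})=\frac1n\sum_{i=1}^n|Y_i-f_{\mathbf{w}}(X_i)|^2$. Assume $K_n\gamma_n^*\ge\beta_n$ and that the weight vectors $\mathbf{w}_1,\mathbf{w}_2$ satisfy $\max\{|(\mathbf{w}_1)^{(L)}_{1,1,k}|,|(\mathbf{w}_2)^{(L)}_{1,1,k}|\}\le\gamma_n^*$ for $k=1,\dots,K_n$ and $\max\{|(\mathbf{w}_1)^{(l)}_{k,i,j}|,|(\mathbf{w}_2)^{(l)}_{k,i,j}|\}\le B_n$ for all $k,i,j$ and $l=1,\dots,L-1$. Then there is a constant $c_{15}>0$ depending only on $d,L,r,a$ such that $$\|(\nabla_{\mathbf{w}}F_n)(\mathbf{w}_1)-(\nabla_{\mathbf{w}}F_n)(\mathbf{w}_2)\|\le c_{15}\,K_n^{3/2}B_n^{2L}(\gamma_n^* )^2\|\mathbf{w}_1-\mathbf{w}_2\|.$$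
   Context: For a weight vector $\mathbf{w}$, $f_{\mathbf{w}}(x)=\sum_{j=1}^{K_n}w^{(L)}_{1,1,j}f^{(L)}_{j,1}(x)$, where for $k\in\{1,\dots,K_n\}$, $i\in\{1,\dots,r\}$: $f^{(l)}_{k,i}(x)=\sigma\big(\sum_{j=1}^rw^{(l-1)}_{k,i,j}f^{(l-1)}_{k,j}(x)+w^{(l-1)}_{k,i,0}\big)$ for $l=2,\dots,L$ and $f^{(1)}_{k,i}(x)=\sigma\big(\sum_{j=1}^dw^{(0)}_{k,i,j}x^{(j)}+w^{(0)}_{k,i,0}\big)$. $\|\cdot\|$ is the Euclidean norm. *)

theory Defs
  imports "HOL-Analysis.Analysis"
begin

definition sigmoid :: "real \<Rightarrow> real" where
  "sigmoid x = 1 / (1 + exp (- x))"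

text \<open>A weight vector is a function on indices (l,k,i,j), meaning w^{(l)}_{k,i,j}.
  Only the indices in nn_index d L r K are used by the network.\<close>
type_synonym weights = "nat \<times> nat \<times> nat \<times> nat \<Rightarrow> real"

definition nn_index :: "nat \<Rightarrow> nat \<Rightarrow> nat \<Rightarrow> nat \<Rightarrow> (nat \<times> nat \<times> nat \<times> nat) set" where
  "nn_index d L r K =
     {(0, k, i, j) | k i j. k \<in> {1..K} \<and> i \<in> {1..r} \<and> j \<in> {0..d}}
   \<union> {(l, k, i, j) | l k i j. l \<in> {1..L-1} \<and> k \<in> {1..K} \<and> i \<in> {1..r} \<and> j \<in> {0..r}}
   \<union> {(L, 1, 1, j) | j. j \<in> {1..K}}"

text \<open>Hidden neuron values: nn_layer d r w x l k i = f^{(l)}_{k,i}(x) for l \<ge> 1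
  (the value for l = 0 is an unused dummy). The input x has coordinates x 1, ..., x d.\<close>
fun nn_layer :: "nat \<Rightarrow> nat \<Rightarrow> weights \<Rightarrow> (nat \<Rightarrow> real) \<Rightarrow> nat \<Rightarrow> nat \<Rightarrow> nat \<Rightarrow> real" where
  "nn_layer d r w x 0 k i = 0"
| "nn_layer d r w x (Suc 0) k i =
     sigmoid ((\<Sum>j=1..d. w (0, k, i, j) * x j) + w (0, k, i, 0))"
| "nn_layer d r w x (Suc (Suc l)) k i =
     sigmoid ((\<Sum>j=1..r. w (Suc l, k, i, j) * nn_layer d r w x (Suc l) k j) + w (Suc l, k, i, 0))"

definition nn_net :: "nat \<Rightarrow> nat \<Rightarrow> nat \<Rightarrow> nat \<Rightarrow> weights \<Rightarrow> (nat \<Rightarrow> real) \<Rightarrow> real" where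
  "nn_net d L r K w x = (\<Sum>j=1..K. w (L, 1, 1, j) * nn_layer d r w x L j 1)"

definition emp_risk :: "nat \<Rightarrow> nat \<Rightarrow> nat \<Rightarrow> nat \<Rightarrow> nat \<Rightarrow> (nat \<Rightarrow> nat \<Rightarrow> real) \<Rightarrow> (nat \<Rightarrow> real)
                        \<Rightarrow> weights \<Rightarrow> real" where
  "emp_risk d L r K n X Y w = (1 / real n) * (\<Sum>i=1..n. \<bar>Y i - nn_net d L r K w (X i)\<bar>^2)"

definition grad_w :: "(weights \<Rightarrow> real) \<Rightarrow> weights \<Rightarrow> (nat \<times> nat \<times> nat \<times> nat) \<Rightarrow> real" where
  "grad_w F w idx = deriv (\<lambda>t. F (w(idx := t))) (w idx)"

definition wnorm :: "(nat \<times> nat \<times> nat \<times> nat) set \<Rightarrow> weights \<Rightarrow> real" where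
  "wnorm I v = sqrt (\<Sum>idx\<in>I. (v idx)^2)"

end

theory Submission
  imports Defs
begin


definition sd :: "real \<Rightarrow> real" where "sd x = sigmoid x * (1 - sigmoid x)"

lemma sigmoid_pos: "0 < sigmoid x" unfolding sigmoid_def
  by (simp add: add_pos_pos)
lemma sigmoid_lt1: "sigmoid x < 1" unfolding sigmoid_def
  by (simp add: add_pos_pos)
lemma abs_sigmoid: "\<bar>sigmoid x\<bar> \<le> 1"
  using sigmoid_pos[of x] sigmoid_lt1[of x] by simp

lemma DERIV_sigmoid: "(sigmoid has_real_derivative sd x) (at x)"
proof -
  have h: "1 + exp (- x) \<noteq> 0" by (smt (verit) exp_gt_zero)
  have "((\<lambda>x. 1 / (1 + exp (- x))) has_real_derivative
      (- (1 / (1 + exp (- x))^2) * (exp (- x) * (- 1)))) (at x)"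
    by (auto intro!: derivative_eq_intros simp: h power2_eq_square)
  moreover have "(- (1 / (1 + exp (- x))^2) * (exp (- x) * (- 1))) = sd x"
    unfolding sd_def sigmoid_def using h by (simp add: field_simps power2_eq_square)
  ultimately show ?thesis unfolding sigmoid_def[abs_def] by simp
qed

lemma DERIV_sd: "(sd has_real_derivative sd x * (1 - 2 * sigmoid x)) (at x)"
proof -
  have "((\<lambda>x. sigmoid x * (1 - sigmoid x)) has_real_derivative
      sd x * (1 - sigmoid x) + sigmoid x * (- sd x)) (at x)"
    by (auto intro!: derivative_eq_intros DERIV_sigmoid)
  then show ?thesis unfolding sd_def[abs_def] by (simp add: algebra_simps)
qed

lemma abs_sd: "\<bar>sd x\<bar> \<le> 1"
  using sigmoid_pos[of x] sigmoid_lt1[of x] unfolding sd_def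
  by (simp add: abs_mult mult_le_one)

lemma abs_sd': "\<bar>sd x * (1 - 2 * sigmoid x)\<bar> \<le> 1"
proof -
  have "\<bar>1 - 2 * sigmoid x\<bar> \<le> 1" using sigmoid_pos[of x] sigmoid_lt1[of x] by simp
  then show ?thesis using abs_sd[of x] by (simp add: abs_mult mult_le_one)
qed

lemma lip1:
  fixes f f' :: "real \<Rightarrow> real"
  assumes D: "\<And>x. (f has_real_derivative f' x) (at x)" and b: "\<And>x. \<bar>f' x\<bar> \<le> 1"
  shows "\<bar>f x - f y\<bar> \<le> \<bar>x - y\<bar>"
proof -
  have *: "\<bar>f u - f v\<bar> \<le> \<bar>u - v\<bar>" if uv: "u < v" for u v
  proof -
    obtain z where "f v - f u = (v - u) * f' z"
      using MVT2[OF uv, of f f'] D by blast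
    then have "\<bar>f u - f v\<bar> = \<bar>v - u\<bar> * \<bar>f' z\<bar>" by (metis abs_minus_commute abs_mult)
    also have "\<dots> \<le> \<bar>v - u\<bar>" using b[of z] by (simp add: mult_left_le)
    finally show ?thesis by simp
  qed
  show ?thesis
  proof (cases "x < y")
    case True then show ?thesis using *[of x y] by simp
  next
    case False
    then show ?thesis using *[of y x] by (cases "x = y") (auto simp: abs_minus_commute)
  qed
qed

lemma sigmoid_lip: "\<bar>sigmoid x - sigmoid y\<bar> \<le> \<bar>x - y\<bar>"
  by (rule lip1[OF DERIV_sigmoid abs_sd])
lemma sd_lip: "\<bar>sd x - sd y\<bar> \<le> \<bar>x - y\<bar>"
  by (rule lip1[OF DERIV_sd abs_sd'])



fun nn_z :: "nat \<Rightarrow> nat \<Rightarrow> weights \<Rightarrow> (nat \<Rightarrow> real) \<Rightarrow> nat \<Rightarrow> nat \<Rightarrow> nat \<Rightarrow> real" where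
  "nn_z d r w x 0 k i = (\<Sum>j=1..d. w (0, k, i, j) * x j) + w (0, k, i, 0)"
| "nn_z d r w x (Suc l) k i = (\<Sum>j=1..r. w (Suc l, k, i, j) * nn_layer d r w x (Suc l) k j) + w (Suc l, k, i, 0)"

lemma layer_Suc: "nn_layer d r w x (Suc l) k i = sigmoid (nn_z d r w x l k i)"
  by (cases l) simp_all

definition ind :: "nat \<times> nat \<times> nat \<times> nat \<Rightarrow> nat \<times> nat \<times> nat \<times> nat \<Rightarrow> real" where
  "ind p idx = (if p = idx then 1 else 0)"

fun nn_d :: "nat \<Rightarrow> nat \<Rightarrow> nat \<times> nat \<times> nat \<times> nat \<Rightarrow> weights \<Rightarrow> (nat \<Rightarrow> real) \<Rightarrow> nat \<Rightarrow> nat \<Rightarrow> nat \<Rightarrow> real" where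
  "nn_d d r idx w x 0 k i = 0"
| "nn_d d r idx w x (Suc 0) k i = sd (nn_z d r w x 0 k i) *
     ((\<Sum>j=1..d. ind (0, k, i, j) idx * x j) + ind (0, k, i, 0) idx)"
| "nn_d d r idx w x (Suc (Suc l)) k i = sd (nn_z d r w x (Suc l) k i) *
     ((\<Sum>j=1..r. ind (Suc l, k, i, j) idx * nn_layer d r w x (Suc l) k j
                + w (Suc l, k, i, j) * nn_d d r idx w x (Suc l) k j) + ind (Suc l, k, i, 0) idx)"

lemma upd_deriv: "((\<lambda>t. (w(idx:=t)) p) has_real_derivative ind p idx) (at y)"
  by (cases "p = idx") (auto simp: ind_def intro!: derivative_eq_intros)

lemma layer_deriv:
  "((\<lambda>t. nn_layer d r (w(idx:=t)) x (Suc l) k i) has_real_derivative nn_d d r idx w x (Suc l) k i) (at (w idx))"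
proof (induction l arbitrary: k i)
  case 0
  have g: "((\<lambda>t. nn_z d r (w(idx:=t)) x 0 k i) has_real_derivative
      ((\<Sum>j=1..d. ind (0, k, i, j) idx * x j) + ind (0, k, i, 0) idx)) (at (w idx))"
    unfolding nn_z.simps
    by (intro DERIV_add DERIV_sum DERIV_cmult_right upd_deriv)
  have "((\<lambda>t. sigmoid (nn_z d r (w(idx:=t)) x 0 k i)) has_real_derivative
      sd (nn_z d r (w(idx:= w idx)) x 0 k i) * ((\<Sum>j=1..d. ind (0, k, i, j) idx * x j) + ind (0, k, i, 0) idx)) (at (w idx))"
    by (rule DERIV_chain'[OF g DERIV_sigmoid])
  then show ?case by (simp only: layer_Suc fun_upd_triv nn_d.simps)
next
  case (Suc l)
  have g: "((\<lambda>t. nn_z d r (w(idx:=t)) x (Suc l) k i) has_real_derivative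
      ((\<Sum>j=1..r. ind (Suc l, k, i, j) idx * nn_layer d r w x (Suc l) k j
                + w (Suc l, k, i, j) * nn_d d r idx w x (Suc l) k j) + ind (Suc l, k, i, 0) idx)) (at (w idx))"
    unfolding nn_z.simps
    apply (intro DERIV_add DERIV_sum upd_deriv)
    apply (rule DERIV_cong)
     apply (rule DERIV_mult[OF upd_deriv Suc.IH])
    apply simp
    done
  have "((\<lambda>t. sigmoid (nn_z d r (w(idx:=t)) x (Suc l) k i)) has_real_derivative
      sd (nn_z d r (w(idx:= w idx)) x (Suc l) k i) * ((\<Sum>j=1..r. ind (Suc l, k, i, j) idx * nn_layer d r w x (Suc l) k j
                + w (Suc l, k, i, j) * nn_d d r idx w x (Suc l) k j) + ind (Suc l, k, i, 0) idx)) (at (w idx))"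
    by (rule DERIV_chain'[OF g DERIV_sigmoid])
  then show ?case by (simp only: layer_Suc fun_upd_triv nn_d.simps)
qed



lemma abs_ind: "\<bar>ind p idx\<bar> \<le> 1" by (simp add: ind_def)

lemma abs_layer: "\<bar>nn_layer d r w x l k i\<bar> \<le> 1"
proof (cases l)
  case 0 then show ?thesis by simp
next
  case (Suc m) then show ?thesis using abs_sigmoid by (simp only: layer_Suc)
qed

lemma sum_abs_bound:
  fixes g :: "nat \<Rightarrow> real"
  assumes "\<And>j. j \<in> {m0..m} \<Longrightarrow> \<bar>g j\<bar> \<le> c"
  shows "\<bar>\<Sum>j=m0..m. g j\<bar> \<le> real (card {m0..m}) * c"
proof -
  have "\<bar>\<Sum>j=m0..m. g j\<bar> \<le> (\<Sum>j=m0..m. \<bar>g j\<bar>)" by (rule sum_abs)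
  also have "\<dots> \<le> (\<Sum>j=m0..m. c)" by (rule sum_mono) (use assms in auto)
  finally show ?thesis by simp
qed

lemma prod_lip:
  fixes a1 a2 b1 b2 :: real
  assumes "\<bar>a1 - a2\<bar> \<le> e1" "\<bar>b1\<bar> \<le> m1" "\<bar>a2\<bar> \<le> m2" "\<bar>b1 - b2\<bar> \<le> e2"
  shows "\<bar>a1 * b1 - a2 * b2\<bar> \<le> e1 * m1 + m2 * e2"
proof -
  have "a1 * b1 - a2 * b2 = (a1 - a2) * b1 + a2 * (b1 - b2)" by (simp add: algebra_simps)
  then have "\<bar>a1 * b1 - a2 * b2\<bar> \<le> \<bar>a1 - a2\<bar> * \<bar>b1\<bar> + \<bar>a2\<bar> * \<bar>b1 - b2\<bar>"
    by (simp add: abs_mult[symmetric] abs_triangle_ineq)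
  also have "\<dots> \<le> e1 * m1 + m2 * e2"
    by (intro add_mono mult_mono) (use assms in auto)
  finally show ?thesis .
qed

lemma prod_bound:
  fixes a b :: real
  assumes "\<bar>a\<bar> \<le> m1" "\<bar>b\<bar> \<le> m2"
  shows "\<bar>a * b\<bar> \<le> m1 * m2"
  using assms by (simp add: abs_mult mult_mono)

definition wbound :: "nat \<Rightarrow> nat \<Rightarrow> nat \<Rightarrow> real \<Rightarrow> weights \<Rightarrow> bool" where
  "wbound L r K B w \<longleftrightarrow> (\<forall>l\<in>{1..L-1}. \<forall>k\<in>{1..K}. \<forall>i\<in>{1..r}. \<forall>j\<in>{0..r}. \<bar>w (l, k, i, j)\<bar> \<le> B)"

definition xbound :: "nat \<Rightarrow> real \<Rightarrow> (nat \<Rightarrow> real) \<Rightarrow> bool" where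
  "xbound d a x \<longleftrightarrow> (\<forall>j\<in>{1..d}. \<bar>x j\<bar> \<le> a)"

definition wclose :: "nat \<Rightarrow> nat \<Rightarrow> nat \<Rightarrow> nat \<Rightarrow> real \<Rightarrow> weights \<Rightarrow> weights \<Rightarrow> bool" where
  "wclose d L r K D w1 w2 \<longleftrightarrow> (\<forall>idx\<in>nn_index d L r K. \<bar>w1 idx - w2 idx\<bar> \<le> D)"

lemma idx0: "k \<in> {1..K} \<Longrightarrow> i \<in> {1..r} \<Longrightarrow> j \<le> d \<Longrightarrow> (0, k, i, j) \<in> nn_index d L r K"
  unfolding nn_index_def by auto
lemma idxh: "Suc l < L \<Longrightarrow> k \<in> {1..K} \<Longrightarrow> i \<in> {1..r} \<Longrightarrow> j \<le> r \<Longrightarrow> (Suc l, k, i, j) \<in> nn_index d L r K"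
  unfolding nn_index_def by auto
lemma idxt: "k \<in> {1..K} \<Longrightarrow> (L, 1, 1, k) \<in> nn_index d L r K"
  unfolding nn_index_def by auto

lemma arith1:
  fixes r B X D N :: real
  assumes "0 \<le> r" "1 \<le> B" "1 \<le> X" "0 \<le> D" "1 \<le> N"
  shows "r * (D + B * (X * D)) + D \<le> 4 * N * (r + 1) * B * X * D"
proof -
  have bx: "1 \<le> B * X" using assms by (metis mult_mono mult_1 zero_le_one order_trans)
  have b: "D \<le> B * X * D" using mult_right_mono[OF bx assms(4)] by simp
  have a: "r * D \<le> r * (B * X * D)"
    by (intro mult_left_mono b assms)
  have c: "2 * ((r + 1) * B * X * D) \<le> 4 * N * ((r + 1) * B * X * D)"
    by (intro mult_right_mono) (use assms in auto)
  have "r * (D + B * (X * D)) + D = r * D + r * (B * X * D) + D" by (simp add: algebra_simps)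
  also have "\<dots> \<le> 2 * ((r + 1) * B * X * D)" using a b bx assms(4) by (simp add: algebra_simps)
  also have "\<dots> \<le> 4 * N * ((r + 1) * B * X * D)" by (rule c)
  finally show ?thesis by (simp add: algebra_simps)
qed



definition NN :: "nat \<Rightarrow> nat \<Rightarrow> real \<Rightarrow> real" where "NN d r a = (real d + real r + 2) * a"
definition PP :: "nat \<Rightarrow> nat \<Rightarrow> real \<Rightarrow> real \<Rightarrow> real" where "PP d r a B = 4 * NN d r a * (real r + 1) * B"

lemma NN_ge: "1 \<le> a \<Longrightarrow> 1 \<le> NN d r a" "1 \<le> a \<Longrightarrow> real d * a + 1 \<le> NN d r a"
  unfolding NN_def by (auto simp: algebra_simps intro: order_trans[of _ "a"])

lemma PP_ge: assumes "1 \<le> a" "1 \<le> B" shows "NN d r a \<le> PP d r a B" "1 \<le> PP d r a B"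
proof -
  have "1 * NN d r a \<le> (4 * (real r + 1) * B) * NN d r a"
  proof (intro mult_right_mono)
    have "1 * 1 \<le> (4 * (real r + 1)) * B" by (intro mult_mono) (use assms in auto)
    then show "1 \<le> 4 * (real r + 1) * B" by simp
  qed (use assms NN_ge[of a d r] in auto)
  then show "NN d r a \<le> PP d r a B" unfolding PP_def by (simp add: algebra_simps)
  then show "1 \<le> PP d r a B" using NN_ge[of a d r] assms by simp
qed

lemma PP_pow: "1 \<le> a \<Longrightarrow> 1 \<le> B \<Longrightarrow> 1 \<le> PP d r a B ^ n"
  using PP_ge(2) one_le_power by blast

lemma z_lip:
  assumes a: "1 \<le> a" and B: "1 \<le> B" and xb: "xbound d a x" and wb2: "wbound L r K B w2"
    and cl: "wclose d L r K D w1 w2" and D0: "0 \<le> D" and k: "k \<in> {1..K}"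
  shows "Suc l \<le> L \<Longrightarrow> i \<in> {1..r} \<Longrightarrow>
    \<bar>nn_z d r w1 x l k i - nn_z d r w2 x l k i\<bar> \<le> PP d r a B ^ (Suc l) * D"
proof (induction l arbitrary: i)
  case 0
  have e: "nn_z d r w1 x 0 k i - nn_z d r w2 x 0 k i =
     (\<Sum>j=1..d. (w1 (0,k,i,j) - w2 (0,k,i,j)) * x j) + (w1 (0,k,i,0) - w2 (0,k,i,0))"
    by (simp add: sum_subtractf[symmetric] algebra_simps)
  have "\<bar>\<Sum>j=1..d. (w1 (0,k,i,j) - w2 (0,k,i,j)) * x j\<bar> \<le> real (card {1..d}) * (D * a)"
  proof (rule sum_abs_bound)
    fix j assume j: "j \<in> {1..d}"
    show "\<bar>(w1 (0,k,i,j) - w2 (0,k,i,j)) * x j\<bar> \<le> D * a"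
      by (rule prod_bound) (use j cl xb k 0 idx0[of k K i r j d L] in \<open>auto simp: wclose_def xbound_def\<close>)
  qed
  moreover have "\<bar>w1 (0,k,i,0) - w2 (0,k,i,0)\<bar> \<le> D"
    using cl k 0 idx0[of k K i r 0 d L] by (auto simp: wclose_def)
  ultimately have "\<bar>nn_z d r w1 x 0 k i - nn_z d r w2 x 0 k i\<bar> \<le> (real d * a + 1) * D"
    unfolding e by (simp add: algebra_simps)
  also have "\<dots> \<le> PP d r a B * D"
    by (intro mult_right_mono) (use NN_ge(2)[OF a, of d r] PP_ge(1)[OF a B, of d r] D0 in auto)
  finally show ?case by simp
next
  case (Suc l)
  have e: "nn_z d r w1 x (Suc l) k i - nn_z d r w2 x (Suc l) k i =
     (\<Sum>j=1..r. w1 (Suc l,k,i,j) * nn_layer d r w1 x (Suc l) k j - w2 (Suc l,k,i,j) * nn_layer d r w2 x (Suc l) k j)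
       + (w1 (Suc l,k,i,0) - w2 (Suc l,k,i,0))"
    by (simp only: nn_z.simps sum_subtractf)
  have "\<bar>\<Sum>j=1..r. w1 (Suc l,k,i,j) * nn_layer d r w1 x (Suc l) k j - w2 (Suc l,k,i,j) * nn_layer d r w2 x (Suc l) k j\<bar>
      \<le> real (card {1..r}) * (D * 1 + B * (PP d r a B ^ Suc l * D))"
  proof (rule sum_abs_bound)
    fix j assume j: "j \<in> {1..r}"
    have "\<bar>nn_layer d r w1 x (Suc l) k j - nn_layer d r w2 x (Suc l) k j\<bar> \<le> PP d r a B ^ Suc l * D"
      unfolding layer_Suc using sigmoid_lip Suc.IH[OF _ j] Suc.prems by (meson Suc_leD order_trans)
    then show "\<bar>w1 (Suc l,k,i,j) * nn_layer d r w1 x (Suc l) k j - w2 (Suc l,k,i,j) * nn_layer d r w2 x (Suc l) k j\<bar>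
      \<le> D * 1 + B * (PP d r a B ^ Suc l * D)"
      by (intro prod_lip abs_layer)
        (use j cl wb2 k Suc.prems idxh[of l L k K i r j d] in \<open>auto simp: wclose_def wbound_def\<close>)
  qed
  moreover have "\<bar>w1 (Suc l,k,i,0) - w2 (Suc l,k,i,0)\<bar> \<le> D"
    using cl k Suc.prems idxh[of l L k K i r 0 d] by (auto simp: wclose_def)
  ultimately have "\<bar>nn_z d r w1 x (Suc l) k i - nn_z d r w2 x (Suc l) k i\<bar>
      \<le> real r * (D + B * (PP d r a B ^ Suc l * D)) + D"
    unfolding e by simp
  also have "\<dots> \<le> 4 * NN d r a * (real r + 1) * B * PP d r a B ^ Suc l * D"
    by (rule arith1) (use NN_ge[OF a] PP_pow[OF a B, of d r "Suc l"] B D0 in auto)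
  finally show ?case by (simp add: PP_def algebra_simps)
qed

lemma layer_lip:
  assumes a: "1 \<le> a" and B: "1 \<le> B" and xb: "xbound d a x" and wb2: "wbound L r K B w2"
    and cl: "wclose d L r K D w1 w2" and D0: "0 \<le> D" and k: "k \<in> {1..K}"
  shows "Suc l \<le> L \<Longrightarrow> i \<in> {1..r} \<Longrightarrow>
    \<bar>nn_layer d r w1 x (Suc l) k i - nn_layer d r w2 x (Suc l) k i\<bar> \<le> PP d r a B ^ (Suc l) * D"
  unfolding layer_Suc using sigmoid_lip z_lip[OF assms] order_trans by blast



lemma d_zero: "q \<noteq> k \<Longrightarrow> nn_d d r (p, q, s, t) w x l k i = 0"
  by (induction d r "(p, q, s, t)" w x l k i rule: nn_d.induct) (auto simp: ind_def)

lemma s0_bound: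
  assumes a: "1 \<le> a" and xb: "xbound d a x"
  shows "\<bar>(\<Sum>j=1..d. ind (0, k, i, j) idx * x j) + ind (0, k, i, 0) idx\<bar> \<le> NN d r a"
proof -
  have "\<bar>\<Sum>j=1..d. ind (0, k, i, j) idx * x j\<bar> \<le> real (card {1..d}) * (1 * a)"
    by (rule sum_abs_bound, rule prod_bound[OF abs_ind]) (use xb in \<open>auto simp: xbound_def\<close>)
  then have "\<bar>(\<Sum>j=1..d. ind (0, k, i, j) idx * x j) + ind (0, k, i, 0) idx\<bar> \<le> real d * a + 1"
    using abs_ind[of "(0, k, i, 0)" idx] by simp
  then show ?thesis using NN_ge(2)[OF a, of d r] by simp
qed

lemma s_bound:
  assumes a: "1 \<le> a" and B: "1 \<le> B" and wb: "wbound L r K B w" and k: "k \<in> {1..K}"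
    and l: "Suc (Suc l) \<le> L" and i: "i \<in> {1..r}"
    and IH: "\<And>j. j \<in> {1..r} \<Longrightarrow> \<bar>nn_d d r idx w x (Suc l) k j\<bar> \<le> PP d r a B ^ Suc l"
  shows "\<bar>(\<Sum>j=1..r. ind (Suc l, k, i, j) idx * nn_layer d r w x (Suc l) k j
                + w (Suc l, k, i, j) * nn_d d r idx w x (Suc l) k j) + ind (Suc l, k, i, 0) idx\<bar>
     \<le> PP d r a B ^ Suc (Suc l)"
proof -
  have "\<bar>\<Sum>j=1..r. ind (Suc l, k, i, j) idx * nn_layer d r w x (Suc l) k j
                + w (Suc l, k, i, j) * nn_d d r idx w x (Suc l) k j\<bar>
     \<le> real (card {1..r}) * (1 + B * (PP d r a B ^ Suc l * 1))"
  proof (rule sum_abs_bound)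
    fix j assume j: "j \<in> {1..r}"
    have "\<bar>ind (Suc l, k, i, j) idx * nn_layer d r w x (Suc l) k j\<bar> \<le> 1 * 1"
      by (intro prod_bound abs_ind abs_layer)
    moreover have "\<bar>w (Suc l, k, i, j) * nn_d d r idx w x (Suc l) k j\<bar> \<le> B * (PP d r a B ^ Suc l * 1)"
      by (intro prod_bound) (use wb i j k l IH[OF j] in \<open>auto simp: wbound_def\<close>)
    ultimately show "\<bar>ind (Suc l, k, i, j) idx * nn_layer d r w x (Suc l) k j
                + w (Suc l, k, i, j) * nn_d d r idx w x (Suc l) k j\<bar> \<le> 1 + B * (PP d r a B ^ Suc l * 1)"
      by simp
  qed
  then have "\<bar>(\<Sum>j=1..r. ind (Suc l, k, i, j) idx * nn_layer d r w x (Suc l) k j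
                + w (Suc l, k, i, j) * nn_d d r idx w x (Suc l) k j) + ind (Suc l, k, i, 0) idx\<bar>
     \<le> real r * (1 + B * (PP d r a B ^ Suc l * 1)) + 1"
    using abs_ind[of "(Suc l, k, i, 0)" idx] by simp
  also have "\<dots> \<le> 4 * NN d r a * (real r + 1) * B * PP d r a B ^ Suc l * 1"
    by (rule arith1) (use NN_ge[OF a] PP_pow[OF a B, of d r "Suc l"] B in auto)
  finally show ?thesis by (simp add: PP_def algebra_simps)
qed

lemma d_bound:
  assumes a: "1 \<le> a" and B: "1 \<le> B" and xb: "xbound d a x" and wb: "wbound L r K B w" and k: "k \<in> {1..K}"
  shows "Suc l \<le> L \<Longrightarrow> i \<in> {1..r} \<Longrightarrow> \<bar>nn_d d r idx w x (Suc l) k i\<bar> \<le> PP d r a B ^ Suc l"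
proof (induction l arbitrary: i)
  case 0
  have "\<bar>nn_d d r idx w x (Suc 0) k i\<bar> \<le> 1 * NN d r a"
    unfolding nn_d.simps by (intro prod_bound abs_sd s0_bound a xb)
  then show ?case using PP_ge(1)[OF a B, of d r] by simp
next
  case (Suc l)
  have "\<bar>nn_d d r idx w x (Suc (Suc l)) k i\<bar> \<le> 1 * PP d r a B ^ Suc (Suc l)"
    unfolding nn_d.simps
    by (intro prod_bound abs_sd s_bound[OF a B wb k Suc.prems(1) Suc.prems(2)] Suc.IH) (use Suc.prems in auto)
  then show ?case by simp
qed



lemma arith2:
  fixes r B X D P :: real
  assumes r: "0 \<le> r" and B: "1 \<le> B" and X: "1 \<le> X" and D: "0 \<le> D" and P: "4 * (r + 1) * B \<le> P"
  shows "(P * X * D) * (P * X) + 1 * (r * (0 * 1 + 1 * (X * D) + (D * X + B * (2 * X^2 * D))))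
         \<le> 2 * (P * X)^2 * D"
proof -
  have XX: "X \<le> X^2" using X by (simp add: power2_eq_square)
  have P1: "1 \<le> P" using P B r
    by (smt (verit, best) mult_le_cancel_right1 mult_nonneg_nonneg)
  have "X * D + (D * X + B * (2 * X^2 * D)) \<le> B * X^2 * D + (B * X^2 * D + B * (2 * X^2 * D))"
  proof -
    have "X * D \<le> X^2 * D" using XX D by (simp add: mult_right_mono)
    also have "\<dots> \<le> B * X^2 * D" using B D by (simp add: mult_right_mono mult_le_cancel_right1)
    finally show ?thesis by (simp add: algebra_simps)
  qed
  also have "\<dots> = 4 * (B * X^2 * D)" by simp
  finally have "r * (X * D + (D * X + B * (2 * X^2 * D))) \<le> r * (4 * (B * X^2 * D))"
    using r by (simp add: mult_left_mono)
  also have "\<dots> \<le> 4 * (r + 1) * B * (X^2 * D)"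
    using B D by (simp add: algebra_simps mult_right_mono)
  also have "\<dots> \<le> P * (X^2 * D)"
    by (rule mult_right_mono[OF P]) (use D in simp)
  also have "\<dots> \<le> P * P * (X^2 * D)"
    using P1 D by (simp add: mult_right_mono mult_le_cancel_right1)
  finally have "r * (X * D + (D * X + B * (2 * X^2 * D))) \<le> P * P * (X^2 * D)" .
  then show ?thesis by (simp add: power2_eq_square algebra_simps)
qed

lemma d_lip:
  assumes a: "1 \<le> a" and B: "1 \<le> B" and xb: "xbound d a x" and wb1: "wbound L r K B w1"
    and wb2: "wbound L r K B w2"
    and cl: "wclose d L r K D w1 w2" and D0: "0 \<le> D" and k: "k \<in> {1..K}"
  shows "Suc l \<le> L \<Longrightarrow> i \<in> {1..r} \<Longrightarrow>
    \<bar>nn_d d r idx w1 x (Suc l) k i - nn_d d r idx w2 x (Suc l) k i\<bar> \<le> 2 * (PP d r a B ^ (Suc l))^2 * D"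
proof (induction l arbitrary: i)
  case 0
  have "\<bar>nn_d d r idx w1 x (Suc 0) k i - nn_d d r idx w2 x (Suc 0) k i\<bar> \<le> (PP d r a B ^ Suc 0 * D) * NN d r a + 1 * 0"
    unfolding nn_d.simps
    by (intro prod_lip order_trans[OF sd_lip] z_lip[OF a B xb wb2 cl D0 k] s0_bound a xb abs_sd)
      (use 0 in auto)
  also have "\<dots> \<le> (PP d r a B * D) * PP d r a B"
    using PP_ge[OF a B, of d r] NN_ge[OF a, of d r] D0
    by (simp add: mult_left_mono)
  also have "\<dots> \<le> 2 * (PP d r a B ^ 1)^2 * D"
    using PP_ge[OF a B, of d r] D0 by (simp add: power2_eq_square algebra_simps)
  finally show ?case by simp
next
  case (Suc l)
  let ?P = "PP d r a B" and ?X = "PP d r a B ^ Suc l"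
  have X1: "1 \<le> ?X" by (rule PP_pow[OF a B])
  have diff: "\<bar>((\<Sum>j=1..r. ind (Suc l, k, i, j) idx * nn_layer d r w1 x (Suc l) k j
                + w1 (Suc l, k, i, j) * nn_d d r idx w1 x (Suc l) k j) + ind (Suc l, k, i, 0) idx)
            - ((\<Sum>j=1..r. ind (Suc l, k, i, j) idx * nn_layer d r w2 x (Suc l) k j
                + w2 (Suc l, k, i, j) * nn_d d r idx w2 x (Suc l) k j) + ind (Suc l, k, i, 0) idx)\<bar>
       \<le> real r * (0 * 1 + 1 * (?X * D) + (D * ?X + B * (2 * ?X^2 * D)))"
  proof -
    have "\<bar>\<Sum>j=1..r. (ind (Suc l, k, i, j) idx * nn_layer d r w1 x (Suc l) k j
                + w1 (Suc l, k, i, j) * nn_d d r idx w1 x (Suc l) k j) -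
               (ind (Suc l, k, i, j) idx * nn_layer d r w2 x (Suc l) k j
                + w2 (Suc l, k, i, j) * nn_d d r idx w2 x (Suc l) k j)\<bar>
       \<le> real (card {1..r}) * (0 * 1 + 1 * (?X * D) + (D * ?X + B * (2 * ?X^2 * D)))"
    proof (rule sum_abs_bound)
      fix j assume j: "j \<in> {1..r}"
      have h1: "\<bar>ind (Suc l, k, i, j) idx * nn_layer d r w1 x (Suc l) k j - ind (Suc l, k, i, j) idx * nn_layer d r w2 x (Suc l) k j\<bar>
          \<le> 0 * 1 + 1 * (?X * D)"
        by (intro prod_lip abs_ind abs_layer layer_lip[OF a B xb wb2 cl D0 k]) (use Suc.prems j in auto)
      have h2: "\<bar>w1 (Suc l, k, i, j) * nn_d d r idx w1 x (Suc l) k j - w2 (Suc l, k, i, j) * nn_d d r idx w2 x (Suc l) k j\<bar>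
          \<le> D * ?X + B * (2 * ?X^2 * D)"
        by (intro prod_lip d_bound[OF a B xb wb1 k] Suc.IH)
          (use Suc.prems j cl wb2 k idxh[of l L k K i r j d] in \<open>auto simp: wclose_def wbound_def\<close>)
      show "\<bar>(ind (Suc l, k, i, j) idx * nn_layer d r w1 x (Suc l) k j
                + w1 (Suc l, k, i, j) * nn_d d r idx w1 x (Suc l) k j) -
               (ind (Suc l, k, i, j) idx * nn_layer d r w2 x (Suc l) k j
                + w2 (Suc l, k, i, j) * nn_d d r idx w2 x (Suc l) k j)\<bar>
          \<le> 0 * 1 + 1 * (?X * D) + (D * ?X + B * (2 * ?X^2 * D))"
        using h1 h2 by (smt (verit))
    qed
    then show ?thesis by (simp add: sum_subtractf)
  qed
  have "\<bar>nn_d d r idx w1 x (Suc (Suc l)) k i - nn_d d r idx w2 x (Suc (Suc l)) k i\<bar>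
      \<le> (?P ^ Suc (Suc l) * D) * ?P ^ Suc (Suc l) + 1 * (real r * (0 * 1 + 1 * (?X * D) + (D * ?X + B * (2 * ?X^2 * D))))"
    unfolding nn_d.simps
    by (intro prod_lip order_trans[OF sd_lip] z_lip[OF a B xb wb2 cl D0 k] s_bound[OF a B wb1 k]
        d_bound[OF a B xb wb1 k] abs_sd diff) (use Suc.prems in auto)
  also have "\<dots> \<le> 2 * (?P * ?X)^2 * D"
  proof -
    have eq: "?P ^ Suc (Suc l) = ?P * ?X" by simp
    have P4: "4 * (real r + 1) * B \<le> ?P"
      using mult_right_mono[OF NN_ge(1)[OF a, of d r], of "4 * (real r + 1) * B"] B
      unfolding PP_def by (simp add: algebra_simps)
    show ?thesis unfolding eq by (rule arith2[OF _ B X1 D0 P4]) simp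
  qed
  finally show ?case by simp
qed



definition dnet :: "nat \<Rightarrow> nat \<Rightarrow> nat \<Rightarrow> nat \<Rightarrow> nat \<times> nat \<times> nat \<times> nat \<Rightarrow> weights \<Rightarrow> (nat \<Rightarrow> real) \<Rightarrow> real" where
  "dnet d L r K idx w x = (\<Sum>k=1..K. ind (L, 1, 1, k) idx * nn_layer d r w x L k 1 + w (L, 1, 1, k) * nn_d d r idx w x L k 1)"

lemma net_deriv:
  assumes "1 \<le> L"
  shows "((\<lambda>t. nn_net d L r K (w(idx:=t)) x) has_real_derivative dnet d L r K idx w x) (at (w idx))"
proof -
  obtain L' where L: "L = Suc L'" using assms by (cases L) auto
  show ?thesis
    unfolding nn_net_def dnet_def L
    apply (intro DERIV_sum)
    apply (rule DERIV_cong)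
     apply (rule DERIV_mult[OF upd_deriv layer_deriv])
    apply simp
    done
qed

lemma ind_sum_bound:
  fixes g :: "nat \<Rightarrow> real"
  assumes "\<And>k. k \<in> {1..K} \<Longrightarrow> \<bar>g k\<bar> \<le> c" "0 \<le> c"
  shows "\<bar>\<Sum>k=1..K. ind (L, 1, 1, k) idx * g k\<bar> \<le> c"
proof -
  obtain p q s t where idx: "idx = (p, q, s, t)" by (cases idx) auto
  show ?thesis
  proof (cases "L = p \<and> q = 1 \<and> s = 1")
    case True
    then have "(\<Sum>k=1..K. ind (L, 1, 1, k) idx * g k) = (\<Sum>k=1..K. if k = t then g k else 0)"
      by (intro sum.cong) (auto simp: ind_def idx)
    also have "\<dots> = (if t \<in> {1..K} then g t else 0)" by (simp add: sum.delta sum.delta')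
    finally show ?thesis using assms by auto
  next
    case False
    then have "(\<Sum>k=1..K. ind (L, 1, 1, k) idx * g k) = 0"
      by (intro sum.neutral) (auto simp: ind_def idx)
    then show ?thesis using assms by simp
  qed
qed

lemma dnet_eq:
  "dnet d L r K (p, q, s, t) w x = (\<Sum>k=1..K. ind (L, 1, 1, k) (p, q, s, t) * nn_layer d r w x L k 1)
     + (if q \<in> {1..K} then w (L, 1, 1, q) * nn_d d r (p, q, s, t) w x L q 1 else 0)"
proof -
  have "(\<Sum>k=1..K. w (L, 1, 1, k) * nn_d d r (p, q, s, t) w x L k 1)
      = (\<Sum>k=1..K. if k = q then w (L, 1, 1, k) * nn_d d r (p, q, s, t) w x L k 1 else 0)"
    by (intro sum.cong) (auto simp: d_zero)
  also have "\<dots> = (if q \<in> {1..K} then w (L, 1, 1, q) * nn_d d r (p, q, s, t) w x L q 1 else 0)"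
    by (simp add: sum.delta sum.delta')
  finally show ?thesis unfolding dnet_def sum.distrib by simp
qed

locale netctx =
  fixes d L r K :: nat and a B gamma D :: real and w1 w2 :: weights and x :: "nat \<Rightarrow> real"
  assumes L: "1 \<le> L" and r: "1 \<le> r" and a: "1 \<le> a" and B: "1 \<le> B" and g: "1 \<le> gamma" and D0: "0 \<le> D"
    and xb: "xbound d a x" and wb1: "wbound L r K B w1" and wb2: "wbound L r K B w2"
    and cl: "wclose d L r K D w1 w2"
    and top1: "\<And>k. k \<in> {1..K} \<Longrightarrow> \<bar>w1 (L, 1, 1, k)\<bar> \<le> gamma"
    and top2: "\<And>k. k \<in> {1..K} \<Longrightarrow> \<bar>w2 (L, 1, 1, k)\<bar> \<le> gamma"
begin

abbreviation "X \<equiv> PP d r a B ^ L"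

lemma X1: "1 \<le> X" by (rule PP_pow[OF a B])

lemma Lsuc: obtains L' where "L = Suc L'" using L by (cases L) auto

lemma layerL_lip: "k \<in> {1..K} \<Longrightarrow> \<bar>nn_layer d r w1 x L k 1 - nn_layer d r w2 x L k 1\<bar> \<le> X * D"
  using layer_lip[OF a B xb wb2 cl D0, of k] r by (metis Lsuc atLeastAtMost_iff le_refl)

lemma dL_bound: "k \<in> {1..K} \<Longrightarrow> w \<in> {w1, w2} \<Longrightarrow> \<bar>nn_d d r idx w x L k 1\<bar> \<le> X"
  using d_bound[OF a B xb wb1, of k] d_bound[OF a B xb wb2, of k] r by (metis Lsuc atLeastAtMost_iff le_refl insertE singletonD)

lemma dL_lip: "k \<in> {1..K} \<Longrightarrow> \<bar>nn_d d r idx w1 x L k 1 - nn_d d r idx w2 x L k 1\<bar> \<le> 2 * X^2 * D"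
  using d_lip[OF a B xb wb1 wb2 cl D0, of k] r by (metis Lsuc atLeastAtMost_iff le_refl)

lemma net_bound: "\<bar>nn_net d L r K w2 x\<bar> \<le> real K * gamma"
proof -
  have "\<bar>nn_net d L r K w2 x\<bar> \<le> real (card {1..K}) * (gamma * 1)"
    unfolding nn_net_def by (intro sum_abs_bound prod_bound top2 abs_layer)
  then show ?thesis by simp
qed

lemma net_lip: "\<bar>nn_net d L r K w1 x - nn_net d L r K w2 x\<bar> \<le> real K * (D * 1 + gamma * (X * D))"
proof -
  have "\<bar>nn_net d L r K w1 x - nn_net d L r K w2 x\<bar> \<le> real (card {1..K}) * (D * 1 + gamma * (X * D))"
    unfolding nn_net_def sum_subtractf[symmetric]
    by (intro sum_abs_bound prod_lip abs_layer top2 layerL_lip)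
      (use cl idxt in \<open>auto simp: wclose_def\<close>)
  then show ?thesis by simp
qed

lemma dnet_bound: "\<bar>dnet d L r K idx w1 x\<bar> \<le> 1 + gamma * X"
proof -
  obtain p q s t where idx: "idx = (p, q, s, t)" by (cases idx) auto
  have "\<bar>\<Sum>k=1..K. ind (L, 1, 1, k) idx * nn_layer d r w1 x L k 1\<bar> \<le> 1"
    by (intro ind_sum_bound abs_layer) simp
  moreover have "\<bar>if q \<in> {1..K} then w1 (L, 1, 1, q) * nn_d d r idx w1 x L q 1 else 0\<bar> \<le> gamma * X"
    using prod_bound[OF top1 dL_bound, of q q w1 idx] g X1 by (auto simp: mult_le_cancel_left1)
  ultimately show ?thesis unfolding idx dnet_eq by (smt (verit))
qed

lemma dnet_lip: "\<bar>dnet d L r K idx w1 x - dnet d L r K idx w2 x\<bar> \<le> X * D + (D * X + gamma * (2 * X^2 * D))"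
proof -
  obtain p q s t where idx: "idx = (p, q, s, t)" by (cases idx) auto
  have "\<bar>(\<Sum>k=1..K. ind (L, 1, 1, k) idx * nn_layer d r w1 x L k 1) - (\<Sum>k=1..K. ind (L, 1, 1, k) idx * nn_layer d r w2 x L k 1)\<bar> \<le> X * D"
    unfolding sum_subtractf[symmetric] right_diff_distrib[symmetric]
    by (intro ind_sum_bound layerL_lip) (use X1 D0 in auto)
  moreover have "\<bar>(if q \<in> {1..K} then w1 (L, 1, 1, q) * nn_d d r idx w1 x L q 1 else 0) -
       (if q \<in> {1..K} then w2 (L, 1, 1, q) * nn_d d r idx w2 x L q 1 else 0)\<bar> \<le> D * X + gamma * (2 * X^2 * D)"
  proof (cases "q \<in> {1..K}")
    case True
    then show ?thesis
      using prod_lip[of "w1 (L, 1, 1, q)" "w2 (L, 1, 1, q)" D "nn_d d r idx w1 x L q 1" X gamma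
          "nn_d d r idx w2 x L q 1" "2 * X^2 * D"] dL_bound[OF True, of w1 idx] dL_lip[OF True, of idx]
        top2[OF True] cl idxt[OF True, of L d r] by (auto simp: wclose_def)
  next
    case False then show ?thesis using D0 X1 g by (simp only: if_not_P[OF False]) simp
  qed
  ultimately show ?thesis unfolding idx dnet_eq by (smt (verit))
qed

lemma sample_lip:
  assumes y: "\<bar>y\<bar> \<le> real K * gamma"
  shows "\<bar>(nn_net d L r K w1 x - y) * dnet d L r K idx w1 x - (nn_net d L r K w2 x - y) * dnet d L r K idx w2 x\<bar>
     \<le> 12 * real K * gamma^2 * X^2 * D"
proof -
  have "\<bar>(nn_net d L r K w1 x - y) * dnet d L r K idx w1 x - (nn_net d L r K w2 x - y) * dnet d L r K idx w2 x\<bar>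
     \<le> (real K * (D * 1 + gamma * (X * D))) * (1 + gamma * X) + (2 * real K * gamma) * (X * D + (D * X + gamma * (2 * X^2 * D)))"
    by (intro prod_lip dnet_bound dnet_lip) (use net_lip net_bound y in auto)
  also have "\<dots> \<le> 12 * real K * gamma^2 * X^2 * D"
  proof -
    have gX: "1 \<le> gamma * X" using g X1 by (metis mult_mono mult_1 zero_le_one order_trans)
    have K0: "0 \<le> real K" by simp
    have e1: "D * 1 + gamma * (X * D) \<le> 2 * (gamma * X) * D" using gX D0 mult_left_mono[OF gX D0] by (simp add: algebra_simps)
    have e2: "1 + gamma * X \<le> 2 * (gamma * X)" using gX by simp
    have e3: "X * D + (D * X + gamma * (2 * X^2 * D)) \<le> 4 * gamma * X^2 * D"
    proof -
      have "X * D \<le> gamma * X^2 * D" using gX X1 D0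
        by (smt (verit, ccfv_SIG) mult.assoc mult_le_cancel_right1 mult_right_mono power2_eq_square)
      then show ?thesis by (simp add: algebra_simps)
    qed
    have "(real K * (D * 1 + gamma * (X * D))) * (1 + gamma * X) \<le> (real K * (2 * (gamma * X) * D)) * (2 * (gamma * X))"
      by (intro mult_mono mult_left_mono e1 e2) (use gX D0 in auto)
    moreover have "(2 * real K * gamma) * (X * D + (D * X + gamma * (2 * X^2 * D))) \<le> (2 * real K * gamma) * (4 * gamma * X^2 * D)"
      by (intro mult_left_mono e3) (use g in auto)
    ultimately show ?thesis by (simp add: power2_eq_square algebra_simps)
  qed
  finally show ?thesis .
qed

end



definition gr :: "nat \<Rightarrow> nat \<Rightarrow> nat \<Rightarrow> nat \<Rightarrow> nat \<Rightarrow> (nat \<Rightarrow> nat \<Rightarrow> real) \<Rightarrow> (nat \<Rightarrow> real)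
                        \<Rightarrow> weights \<Rightarrow> nat \<times> nat \<times> nat \<times> nat \<Rightarrow> real" where
  "gr d L r K n X Y w idx = (1 / real n) * (\<Sum>i=1..n. 2 * ((nn_net d L r K w (X i) - Y i) * dnet d L r K idx w (X i)))"

lemma grad_eq:
  assumes "1 \<le> L"
  shows "grad_w (emp_risk d L r K n X Y) w idx = gr d L r K n X Y w idx"
  unfolding grad_w_def
proof (rule DERIV_imp_deriv)
  have "((\<lambda>t. (1 / real n) * (\<Sum>i=1..n. (Y i - nn_net d L r K (w(idx:=t)) (X i))^2)) has_real_derivative
      (1 / real n) * (\<Sum>i=1..n. real 2 * ((0 - dnet d L r K idx w (X i)) * (Y i - nn_net d L r K (w(idx:=w idx)) (X i))^(2 - Suc 0)))) (at (w idx))"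
    by (intro DERIV_cmult DERIV_sum DERIV_power DERIV_diff DERIV_const net_deriv[OF assms])
  then show "((\<lambda>t. emp_risk d L r K n X Y (w(idx := t))) has_real_derivative gr d L r K n X Y w idx) (at (w idx))"
    unfolding emp_risk_def gr_def by (simp add: algebra_simps)
qed

lemma nn_index_eq: "nn_index d L r K =
   (\<lambda>(k, i, j). (0, k, i, j)) ` ({1..K} \<times> {1..r} \<times> {0..d})
 \<union> ({1..L-1} \<times> {1..K} \<times> {1..r} \<times> {0..r})
 \<union> (\<lambda>j. (L, 1, 1, j)) ` {1..K}"
  unfolding nn_index_def by auto

lemma nn_index_finite: "finite (nn_index d L r K)"
  unfolding nn_index_eq by auto

lemma nn_index_card: "real (card (nn_index d L r K)) \<le> real (r * (d + 1) + (L - 1) * r * (r + 1) + 1) * real K"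
proof -
  have "card (nn_index d L r K) \<le> card ((\<lambda>(k, i, j). (0::nat, k, i, j)) ` ({1..K} \<times> {1..r} \<times> {0..d}))
     + card ({1..L-1} \<times> {1..K} \<times> {1..r} \<times> {0..r}) + card ((\<lambda>j. (L, 1::nat, 1::nat, j)) ` {1..K})"
    unfolding nn_index_eq by (meson card_Un_le add_le_mono order_trans le_refl)
  also have "\<dots> \<le> card ({1..K} \<times> {1..r} \<times> {0..d}) + card ({1..L-1} \<times> {1..K} \<times> {1..r} \<times> {0..r}) + card {1..K}"
    by (intro add_mono card_image_le) auto
  also have "\<dots> = (r * (d + 1) + (L - 1) * r * (r + 1) + 1) * K"
  proof -
    obtain m where m: "L - 1 = m" by simp
    show ?thesis unfolding m by (simp add: card_cartesian_product algebra_simps)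
  qed
  finally show ?thesis by (simp only: of_nat_mult[symmetric] of_nat_le_iff)
qed

lemma wnorm_ge: "finite I \<Longrightarrow> idx \<in> I \<Longrightarrow> \<bar>v idx\<bar> \<le> wnorm I v"
  unfolding wnorm_def
  by (metis member_le_sum real_sqrt_abs real_sqrt_le_mono zero_le_power2)

lemma wnorm_le: "finite I \<Longrightarrow> (\<And>idx. idx \<in> I \<Longrightarrow> \<bar>v idx\<bar> \<le> M) \<Longrightarrow> wnorm I v \<le> sqrt (real (card I)) * M"
proof -
  assume f: "finite I" and b: "\<And>idx. idx \<in> I \<Longrightarrow> \<bar>v idx\<bar> \<le> M"
  show ?thesis
  proof (cases "I = {}")
    case True then show ?thesis by (simp add: wnorm_def)
  next
    case False
    then obtain i0 where "i0 \<in> I" by auto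
    then have M0: "0 \<le> M" using b[of i0] by linarith
    have "(\<Sum>idx\<in>I. (v idx)^2) \<le> (\<Sum>idx\<in>I. M^2)"
      by (intro sum_mono) (metis b abs_ge_zero power2_abs power_mono)
    then have "wnorm I v \<le> sqrt (real (card I) * M^2)" unfolding wnorm_def by simp
    also have "\<dots> = sqrt (real (card I)) * M" using M0 by (simp add: real_sqrt_mult)
    finally show ?thesis .
  qed
qed



theorem lemma5:
  fixes d L r :: nat and a :: real
  assumes "d \<ge> 1" and "L \<ge> 1" and "r \<ge> 1" and "a \<ge> 1"
  shows "\<exists>c15 > 0. \<forall>(K::nat) (n::nat) (beta::real) (gamma::real) (B::real)
            (X :: nat \<Rightarrow> nat \<Rightarrow> real) (Y :: nat \<Rightarrow> real) (w1::weights) (w2::weights).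
     n \<ge> 1 \<and> K \<ge> 1 \<and> gamma \<ge> 1 \<and> B \<ge> 1 \<and> beta > 0
     \<and> (\<forall>i\<in>{1..n}. (\<forall>j\<in>{1..d}. \<bar>X i j\<bar> \<le> a) \<and> \<bar>Y i\<bar> \<le> beta)
     \<and> real K * gamma \<ge> beta
     \<and> (\<forall>k\<in>{1..K}. max \<bar>w1 (L, 1, 1, k)\<bar> \<bar>w2 (L, 1, 1, k)\<bar> \<le> gamma)
     \<and> (\<forall>l\<in>{1..L-1}. \<forall>k\<in>{1..K}. \<forall>i\<in>{1..r}. \<forall>j\<in>{0..r}.
           max \<bar>w1 (l, k, i, j)\<bar> \<bar>w2 (l, k, i, j)\<bar> \<le> B)
     \<longrightarrow> wnorm (nn_index d L r K)
           (\<lambda>idx. grad_w (emp_risk d L r K n X Y) w1 idx - grad_w (emp_risk d L r K n X Y) w2 idx)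
         \<le> c15 * real K powr (3/2) * B ^ (2 * L) * gamma^2
             * wnorm (nn_index d L r K) (\<lambda>idx. w1 idx - w2 idx)"
proof -
  define c0 where "c0 = real (r * (d + 1) + (L - 1) * r * (r + 1) + 1)"
  define Q where "Q = 4 * NN d r a * (real r + 1)"
  define c15 where "c15 = 24 * sqrt c0 * Q ^ (2 * L)"
  have c0: "1 \<le> c0" unfolding c0_def by simp
  have Q0: "0 < Q" unfolding Q_def using NN_ge(1)[OF assms(4), of d r] by simp
  have c15: "c15 > 0" unfolding c15_def using c0 Q0 by simp
  show ?thesis
  proof (intro exI[of _ c15] conjI allI impI c15)
    fix K n :: nat and beta gamma B :: real and X :: "nat \<Rightarrow> nat \<Rightarrow> real" and Y :: "nat \<Rightarrow> real" and w1 w2 :: weights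
    assume H: "n \<ge> 1 \<and> K \<ge> 1 \<and> gamma \<ge> 1 \<and> B \<ge> 1 \<and> beta > 0
     \<and> (\<forall>i\<in>{1..n}. (\<forall>j\<in>{1..d}. \<bar>X i j\<bar> \<le> a) \<and> \<bar>Y i\<bar> \<le> beta)
     \<and> real K * gamma \<ge> beta
     \<and> (\<forall>k\<in>{1..K}. max \<bar>w1 (L, 1, 1, k)\<bar> \<bar>w2 (L, 1, 1, k)\<bar> \<le> gamma)
     \<and> (\<forall>l\<in>{1..L-1}. \<forall>k\<in>{1..K}. \<forall>i\<in>{1..r}. \<forall>j\<in>{0..r}.
           max \<bar>w1 (l, k, i, j)\<bar> \<bar>w2 (l, k, i, j)\<bar> \<le> B)"
    have n1: "1 \<le> n" and K1: "1 \<le> K" and g1: "1 \<le> gamma" and B1: "1 \<le> B" using H by blast+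
    have hX: "\<forall>i\<in>{1..n}. (\<forall>j\<in>{1..d}. \<bar>X i j\<bar> \<le> a) \<and> \<bar>Y i\<bar> \<le> beta" using H by blast
    have hb: "real K * gamma \<ge> beta" using H by blast
    have ht: "\<forall>k\<in>{1..K}. max \<bar>w1 (L, 1, 1, k)\<bar> \<bar>w2 (L, 1, 1, k)\<bar> \<le> gamma" using H by blast
    have hw: "\<forall>l\<in>{1..L-1}. \<forall>k\<in>{1..K}. \<forall>i\<in>{1..r}. \<forall>j\<in>{0..r}.
           max \<bar>w1 (l, k, i, j)\<bar> \<bar>w2 (l, k, i, j)\<bar> \<le> B" using H by blast
    define I where "I = nn_index d L r K"
    define D where "D = wnorm I (\<lambda>idx. w1 idx - w2 idx)"
    have fI: "finite I" unfolding I_def by (rule nn_index_finite)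
    have D0: "0 \<le> D" unfolding D_def wnorm_def by (simp add: sum_nonneg)
    have cl: "wclose d L r K D w1 w2" unfolding wclose_def D_def I_def
      using wnorm_ge[OF fI] I_def by auto
    have wb1: "wbound L r K B w1" and wb2: "wbound L r K B w2"
      using hw unfolding wbound_def max.bounded_iff by blast+
    have top1: "\<And>k. k \<in> {1..K} \<Longrightarrow> \<bar>w1 (L, 1, 1, k)\<bar> \<le> gamma"
      and top2: "\<And>k. k \<in> {1..K} \<Longrightarrow> \<bar>w2 (L, 1, 1, k)\<bar> \<le> gamma"
      using ht unfolding max.bounded_iff by blast+
    have ctx: "netctx d L r K a B gamma D w1 w2 (X i)" if i: "i \<in> {1..n}" for i
    proof -
      have xb: "xbound d a (X i)" using hX i unfolding xbound_def by blast
      show ?thesis unfolding netctx_def using assms(2,3,4) B1 g1 D0 xb wb1 wb2 cl top1 top2 by blast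
    qed
    define M where "M = 24 * real K * gamma^2 * (PP d r a B ^ L)^2 * D"
    have per: "\<bar>gr d L r K n X Y w1 idx - gr d L r K n X Y w2 idx\<bar> \<le> M" for idx
    proof -
      have "\<bar>\<Sum>i=1..n. 2 * ((nn_net d L r K w1 (X i) - Y i) * dnet d L r K idx w1 (X i))
                  - 2 * ((nn_net d L r K w2 (X i) - Y i) * dnet d L r K idx w2 (X i))\<bar>
            \<le> real (card {1..n}) * (2 * (12 * real K * gamma^2 * (PP d r a B ^ L)^2 * D))"
      proof (rule sum_abs_bound)
        fix i assume i: "i \<in> {1..n}"
        have "\<bar>Y i\<bar> \<le> real K * gamma" using hX hb i by (meson order_trans)
        from netctx.sample_lip[OF ctx[OF i] this, of idx]
        show "\<bar>2 * ((nn_net d L r K w1 (X i) - Y i) * dnet d L r K idx w1 (X i))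
                  - 2 * ((nn_net d L r K w2 (X i) - Y i) * dnet d L r K idx w2 (X i))\<bar>
            \<le> 2 * (12 * real K * gamma^2 * (PP d r a B ^ L)^2 * D)" by simp
      qed
      then have "\<bar>(\<Sum>i=1..n. 2 * ((nn_net d L r K w1 (X i) - Y i) * dnet d L r K idx w1 (X i)))
                  - (\<Sum>i=1..n. 2 * ((nn_net d L r K w2 (X i) - Y i) * dnet d L r K idx w2 (X i)))\<bar>
            \<le> real n * M"
      proof -
        have e: "real (card {1..n}) * (2 * (12 * real K * gamma^2 * (PP d r a B ^ L)^2 * D)) = real n * M"
          unfolding M_def by simp
        from \<open>\<bar>\<Sum>i=1..n. _\<bar> \<le> _\<close> show ?thesis unfolding e sum_subtractf .
      qed
      then have "(1 / real n) * \<bar>(\<Sum>i=1..n. 2 * ((nn_net d L r K w1 (X i) - Y i) * dnet d L r K idx w1 (X i)))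
                  - (\<Sum>i=1..n. 2 * ((nn_net d L r K w2 (X i) - Y i) * dnet d L r K idx w2 (X i)))\<bar>
            \<le> (1 / real n) * (real n * M)" by (intro mult_left_mono) auto
      moreover have "gr d L r K n X Y w1 idx - gr d L r K n X Y w2 idx =
          (1 / real n) * ((\<Sum>i=1..n. 2 * ((nn_net d L r K w1 (X i) - Y i) * dnet d L r K idx w1 (X i)))
                  - (\<Sum>i=1..n. 2 * ((nn_net d L r K w2 (X i) - Y i) * dnet d L r K idx w2 (X i))))"
        unfolding gr_def by (simp only: right_diff_distrib)
      ultimately show ?thesis using n1 by (simp only: abs_mult) simp
    qed
    have "wnorm I (\<lambda>idx. grad_w (emp_risk d L r K n X Y) w1 idx - grad_w (emp_risk d L r K n X Y) w2 idx)
        = wnorm I (\<lambda>idx. gr d L r K n X Y w1 idx - gr d L r K n X Y w2 idx)"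
      by (simp only: grad_eq[OF assms(2)])
    also have "\<dots> \<le> sqrt (real (card I)) * M" by (rule wnorm_le[OF fI per])
    also have "\<dots> \<le> sqrt (c0 * real K) * M"
      by (intro mult_right_mono real_sqrt_le_mono)
        (use nn_index_card[of d L r K] D0 g1 in \<open>auto simp: I_def c0_def M_def\<close>)
    also have "\<dots> = c15 * real K powr (3/2) * B ^ (2 * L) * gamma^2 * D"
    proof -
      have "real K powr (3/2) = real K powr (1 + 1/2)" by simp
      also have "\<dots> = real K powr 1 * real K powr (1/2)" by (rule powr_add)
      also have "\<dots> = real K * sqrt (real K)" using K1 by (simp add: powr_half_sqrt)
      finally have "real K powr (3/2) = real K * sqrt (real K)" .
      moreover have "(PP d r a B ^ L)^2 = Q ^ (2 * L) * B ^ (2 * L)"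
      proof -
        have "PP d r a B = Q * B" unfolding PP_def Q_def by simp
        then show ?thesis by (simp add: power_mult_distrib power_mult[symmetric] mult.commute)
      qed
      ultimately show ?thesis unfolding M_def c15_def by (simp add: real_sqrt_mult algebra_simps)
    qed
    finally show "wnorm (nn_index d L r K)
           (\<lambda>idx. grad_w (emp_risk d L r K n X Y) w1 idx - grad_w (emp_risk d L r K n X Y) w2 idx)
         \<le> c15 * real K powr (3/2) * B ^ (2 * L) * gamma^2
             * wnorm (nn_index d L r K) (\<lambda>idx. w1 idx - w2 idx)" unfolding D_def I_def .
  qed
qed


end
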